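(* Let $(X_1,X_2,A)\in\mathbb R\times\mathbb R\times\mathbb R\subset\mathbb C^2\times\mathbb R$ (i.e. $X_1,X_2$ real) satisfy $$-2\,\mathrm{Re}(X_1+X_2)-2\,\mathrm{Re}\bigl(X_1\overline{X}_2e^{-2iA}\bigr)+|X_1|^2+|X_2|^2+1=0$$ and $-\pi/2\le A\le\pi/2$. Then $\mathrm{Re}(X_1e^{-iA})\ge0$. *)

theory Defs
  imports Complex_Main
begin

end

theory Submission
  imports Defs
begin

theorem theorem3p4:
  fixes X1 X2 A :: real
  assumes eq: "- 2 * Re (complex_of_real X1 + complex_of_real X2)
      - 2 * Re (complex_of_real X1 * cnj (complex_of_real X2) * exp (- 2 * \<i> * complex_of_real A))
      + (cmod (complex_of_real X1))\<^sup>2 + (cmod (complex_of_real X2))\<^sup>2 + 1 = 0"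
    and A_lo: "- pi / 2 \<le> A" and A_hi: "A \<le> pi / 2"
  shows "Re (complex_of_real X1 * exp (- \<i> * complex_of_real A)) \<ge> 0"
proof -
  have e1: "exp (- 2 * \<i> * complex_of_real A) = cis (-(2*A))"
    by (simp add: cis_conv_exp algebra_simps)
  have e2: "exp (- \<i> * complex_of_real A) = cis (-A)"
    by (simp add: cis_conv_exp)
  define c where "c = cos A"
  have c0: "c \<ge> 0" unfolding c_def using A_lo A_hi by (intro cos_ge_zero) auto
  have c2: "cos (2*A) = 2*c^2 - 1" unfolding c_def by (simp add: cos_double_cos)
  have E: "-2*X1 - 2*X2 - 2*X1*X2*(2*c^2-1) + X1^2 + X2^2 + 1 = 0"
    using eq unfolding e1 by (simp add: c2 norm_of_real power2_abs)
  show ?thesis unfolding e2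
  proof (simp add: c_def[symmetric], rule ccontr)
    assume "\<not> 0 \<le> X1 * c"
    hence x: "X1 < 0" and cp: "c > 0" using c0
      by (auto simp: not_le mult_less_0_iff)
    have id: "(X2 - (1 + X1*(2*c^2-1)))^2 = X1*(2*c^2)*(2 - X1*2*(1-c^2))"
      using E by (simp add: algebra_simps power2_eq_square)
    have "X1*(2*c^2)*(2 - X1*2*(1-c^2)) < 0"
    proof -
      have "2 - X1*2*(1-c^2) > 0"
      proof -
        have "c \<le> 1" unfolding c_def by simp
        hence "c^2 \<le> 1" using c0 by (simp add: power_le_one)
        hence "X1*2*(1-c^2) \<le> 0" using x by (simp add: mult_nonpos_nonneg)
        thus ?thesis by linarith
      qed
      moreover have "X1*(2*c^2) < 0" using x cp by (simp add: mult_neg_pos)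
      ultimately show ?thesis by (simp add: mult_neg_pos)
    qed
    thus False using id by (smt (verit) zero_le_power2)
  qed
qed

end
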